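(* Let $n\ge 1$ and $N\ge 1$ be integers, and let $Z_1,\dots,Z_n,Y_1,\dots,Y_N$ be independent identically distributed random variables with values in $[0,1]$ and mean $\mu$. Let $\overline Z=\frac1n\sum_{t=1}^n Z_t$ and $\overline X^{n+N}=\frac{n\overline Z+\sum_{t=1}^N Y_t}{n+N}$. Let $a\in\mathbb R$ be a constant and $d>0$. Then $$\Pr\!\left(\overline Z\le a-d\ \text{ and }\ \overline X^{n+N}\ge a\right)\le 2\exp\!\left(-\varphi\, d^2\, n\right)$$ and $$\Pr\!\left(\overline Z\ge a+d\ \text{ and }\ \overline X^{n+N}\le a\right)\le 2\exp\!\left(-\varphi\, d^2\, n\right),$$ where $$\varphi=\min_{r\ge 0}\,2\left(\frac{1+r}{1+\sqrt r}\right)^2=8(\sqrt2-1)^2>1.37 .$$ (In the application, for $i\ne\alpha$: $Z$ are the first $n=n_i$ samples of arm $i$, $a=\overline X_\alpha^{n_\alpha}$ and $d=\overline X_\alpha^{n_\alpha}-\overline X_i^{n_i}$; for arm $\alpha$: $n=n_\alpha$, $a=\overline X_\beta^{n_\beta}$ and $d=\overline X_\alpha^{n_\alpha}-\overline X_\beta^{n_\beta}$.)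
   Context: $\overline X_j^{n_j}$ denotes the sample mean of the first $n_j$ samples of arm $j$; $\alpha$ is the arm with the largest sample mean and $\beta$ the arm with the second largest. The quantity $\overline X^{n+N}$ is the sample mean of an arm after $N$ further samples beyond the first $n$. *)

theory Defs
  imports "HOL-Probability.Probability"
begin

text \<open>The constant varphi of the paper, defined as the infimum over r \<ge> 0
  (the theorem states that it is attained, i.e. a minimum).\<close>
definition varphi :: real where
  "varphi = (INF r\<in>{0..}. 2 * ((1 + r) / (1 + sqrt r))^2)"

end

theory Submission
  imports Defs
begin

lemma hoeff_both:
  assumes P: "prob_space M" and fin: "finite I" and ne: "I \<noteq> {}"
    and ind: "prob_space.indep_vars M (\<lambda>_. borel) X I"
    and rng: "\<And>i x. i \<in> I \<Longrightarrow> x \<in> space M \<Longrightarrow> X i x \<in> {0..1}"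
    and ex: "\<And>i. i \<in> I \<Longrightarrow> prob_space.expectation M (X i) = m"
    and e: "e \<ge> 0"
  shows "measure M {x\<in>space M. (\<Sum>i\<in>I. X i x) \<ge> real (card I) * m + e} \<le> exp (-2 * e\<^sup>2 / real (card I))"
    and "measure M {x\<in>space M. (\<Sum>i\<in>I. X i x) \<le> real (card I) * m - e} \<le> exp (-2 * e\<^sup>2 / real (card I))"
proof -
  interpret prob_space M by (fact P)
  interpret H: Hoeffding_ineq M I X "\<lambda>_. 0" "\<lambda>_. 1" "\<Sum>i\<in>I. expectation (X i)"
    by unfold_locales (use fin ind rng in \<open>auto intro!: AE_I2\<close>)
  have mu: "(\<Sum>i\<in>I. expectation (X i)) = real (card I) * m" using ex by simp
  have pos: "(\<Sum>i\<in>I. ((1::real) - 0)\<^sup>2) > 0" using fin ne by (simp add: card_gt_0_iff)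
  show "measure M {x\<in>space M. (\<Sum>i\<in>I. X i x) \<ge> real (card I) * m + e} \<le> exp (-2 * e\<^sup>2 / real (card I))"
    using H.Hoeffding_ineq_ge[OF e pos] mu by simp
  show "measure M {x\<in>space M. (\<Sum>i\<in>I. X i x) \<le> real (card I) * m - e} \<le> exp (-2 * e\<^sup>2 / real (card I))"
    using H.Hoeffding_ineq_le[OF e pos] mu by simp
qed

lemma sq2: "(2 * (x::real))^2 = 4 * x^2" by (simp add: power2_eq_square)

lemma c_sq: "(sqrt 2 - 1)^2 + 2 * (sqrt 2 - 1) = (1::real)"
  by (simp add: power2_eq_square algebra_simps)

lemma c_pos: "sqrt 2 - 1 > (0::real)"
  by (simp add: real_less_rsqrt)

lemma lowb:
  fixes u :: real assumes "u \<ge> 0"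
  shows "1 + u^2 \<ge> 2 * (sqrt 2 - 1) * (1 + u)"
proof -
  have "1 + u^2 - 2 * (sqrt 2 - 1) * (1 + u) = (u - (sqrt 2 - 1))^2"
    using c_sq by (simp add: power2_eq_square algebra_simps)
  thus ?thesis by (metis diff_ge_0_iff_ge zero_le_power2)
qed

lemma f_lower:
  fixes r :: real assumes "r \<ge> 0"
  shows "2 * ((1 + r) / (1 + sqrt r))^2 \<ge> 8 * (sqrt 2 - 1)^2"
proof -
  have "2 * (sqrt 2 - 1) \<le> (1 + r) / (1 + sqrt r)"
    using lowb[of "sqrt r"] assms by (simp add: pos_le_divide_eq add_pos_nonneg)
  hence "(2 * (sqrt 2 - 1))^2 \<le> ((1 + r) / (1 + sqrt r))^2"
    using c_pos by (intro power_mono) auto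
  thus ?thesis using sq2[of "sqrt 2 - 1"] by (simp only:)
qed

lemma f_at:
  "2 * ((1 + (sqrt 2 - 1)^2) / (1 + sqrt ((sqrt 2 - 1)^2)))^2 = 8 * (sqrt 2 - 1)^2"
proof -
  have c: "sqrt ((sqrt 2 - 1)^2) = sqrt 2 - 1" using c_pos by simp
  have "(1 + (sqrt 2 - 1)^2) = 2 * (sqrt 2 - 1) * (1 + (sqrt 2 - 1))"
    using c_sq by (simp add: power2_eq_square algebra_simps)
  hence "(1 + (sqrt 2 - 1)^2) / (1 + sqrt ((sqrt 2 - 1)^2)) = 2 * (sqrt 2 - 1)"
    using c c_pos by (simp add: add_pos_pos)
  thus ?thesis using sq2[of "sqrt 2 - 1"] by (simp only:)
qed

lemma varphi_eq: "varphi = 8 * (sqrt 2 - 1)^2"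
proof (rule antisym)
  show "varphi \<le> 8 * (sqrt 2 - 1)^2"
    unfolding varphi_def f_at[symmetric]
    by (rule cINF_lower) (auto intro!: bdd_belowI2[where m = 0])
  show "8 * (sqrt 2 - 1)^2 \<le> varphi"
    unfolding varphi_def
  proof (rule cINF_greatest)
    fix r :: real assume "r \<in> {0..}"
    thus "8 * (sqrt 2 - 1)^2 \<le> 2 * ((1 + r) / (1 + sqrt r))^2" by (intro f_lower) simp
  qed simp
qed

lemma varphi_gt: "varphi > 1.37"
proof -
  have "sqrt 2 < sqrt (1.414375^2)"
    by (rule real_sqrt_less_mono) (simp add: power2_eq_square)
  hence "sqrt 2 < 1.414375" by simp
  thus ?thesis unfolding varphi_eq by (simp add: power2_eq_square algebra_simps)
qed

lemma key:
  fixes n N d s t :: real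
  assumes n: "n > 0" and N: "N > 0" and d: "d > 0" and st: "s + t = d * (1 + n / N)"
  shows "(s \<ge> 0 \<and> 2 * n * s^2 \<ge> varphi * d^2 * n) \<or> (t \<ge> 0 \<and> 2 * N * t^2 \<ge> varphi * d^2 * n)"
proof (rule ccontr)
  assume A: "\<not> ?thesis"
  define c where "c = sqrt 2 - 1"
  define u where "u = sqrt (n / N)"
  have c0: "c > 0" using c_pos c_def by simp
  have u0: "u \<ge> 0" and u2: "u^2 = n / N" using n N by (auto simp: u_def)
  have vp: "varphi = 8 * c^2" using varphi_eq c_def by simp
  have s: "s < 2 * c * d"
  proof (cases "s \<ge> 0")
    case True
    hence "2 * n * s^2 < 8 * c^2 * d^2 * n" using A vp by auto
    hence "s^2 < (2 * c * d)^2" using n by (simp add: power_mult_distrib)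
    moreover have "0 \<le> 2 * c * d" using c0 d by simp
    ultimately show ?thesis by (rule power_less_imp_less_base)
  next
    case False
    moreover have "0 < 2 * c * d" using c0 d by simp
    ultimately show ?thesis by linarith
  qed
  have t: "t < 2 * c * d * u"
  proof (cases "t \<ge> 0")
    case True
    hence "2 * N * t^2 < 8 * c^2 * d^2 * n" using A vp by auto
    hence "t^2 < 4 * c^2 * d^2 * (n / N)" using N by (simp add: field_simps)
    hence "t^2 < (2 * c * d * u)^2" using u2 by (simp add: power_mult_distrib)
    moreover have "0 \<le> 2 * c * d * u" using c0 d u0 by simp
    ultimately show ?thesis by (rule power_less_imp_less_base)
  next
    case False
    moreover have "0 \<le> 2 * c * d * u" using c0 d u0 by simp
    ultimately show ?thesis by linarith
  qed
  have "d * (1 + u^2) < d * (2 * c * (1 + u))" using s t st u2 by (simp add: algebra_simps)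
  hence "1 + u^2 < 2 * c * (1 + u)" using d by simp
  thus False using lowb[OF u0] c_def by simp
qed

theorem mainTheorem2:
  fixes M :: "'a measure" and Z Y :: "nat \<Rightarrow> 'a \<Rightarrow> real"
    and n N :: nat and \<mu> a d :: real
  assumes "prob_space M"
    and "n \<ge> 1" and "N \<ge> 1"
    and indep: "prob_space.indep_vars M (\<lambda>_. borel)
                  (\<lambda>i. if i < n then Z i else Y (i - n)) {..<n+N}"
    and rv_Z: "\<And>t. t < n \<Longrightarrow> Z t \<in> borel_measurable M"
    and rv_Y: "\<And>t. t < N \<Longrightarrow> Y t \<in> borel_measurable M"
    and ident_Z: "\<And>t. t < n \<Longrightarrow> distr M borel (Z t) = distr M borel (Z 0)"
    and ident_Y: "\<And>t. t < N \<Longrightarrow> distr M borel (Y t) = distr M borel (Z 0)"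
    and range_Z: "\<And>t x. t < n \<Longrightarrow> x \<in> space M \<Longrightarrow> Z t x \<in> {0..1}"
    and range_Y: "\<And>t x. t < N \<Longrightarrow> x \<in> space M \<Longrightarrow> Y t x \<in> {0..1}"
    and mean_Z: "\<And>t. t < n \<Longrightarrow> prob_space.expectation M (Z t) = \<mu>"
    and mean_Y: "\<And>t. t < N \<Longrightarrow> prob_space.expectation M (Y t) = \<mu>"
    and "d > 0"
  defines "Zbar \<equiv> (\<lambda>x. (\<Sum>t<n. Z t x) / real n)"
    and "Xbar \<equiv> (\<lambda>x. (real n * ((\<Sum>t<n. Z t x) / real n) + (\<Sum>t<N. Y t x)) / (real n + real N))"
  shows "measure M {x \<in> space M. Zbar x \<le> a - d \<and> Xbar x \<ge> a}
           \<le> 2 * exp (- varphi * d^2 * real n)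
         \<and> measure M {x \<in> space M. Zbar x \<ge> a + d \<and> Xbar x \<le> a}
           \<le> 2 * exp (- varphi * d^2 * real n)
         \<and> (\<exists>r\<ge>0. 2 * ((1 + r) / (1 + sqrt r))^2 = varphi)
         \<and> varphi = 8 * (sqrt 2 - 1)^2
         \<and> varphi > 1.37"
proof -
  interpret prob_space M by fact
  define W where "W = (\<lambda>i. if i < n then Z i else Y (i - n))"
  define SZ where "SZ = (\<lambda>x. \<Sum>t<n. Z t x)"
  define SY where "SY = (\<lambda>x. \<Sum>t<N. Y t x)"
  have n0: "real n > 0" and N0: "real N > 0" using assms(2,3) by auto
  have mZ[measurable]: "SZ \<in> borel_measurable M"
    unfolding SZ_def by (intro borel_measurable_sum) (auto intro: rv_Z)
  have mY[measurable]: "SY \<in> borel_measurable M"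
    unfolding SY_def by (intro borel_measurable_sum) (auto intro: rv_Y)
  have indW: "indep_vars (\<lambda>_. borel) W {..<n+N}" using indep unfolding W_def by simp
  have sumZ: "(\<Sum>i\<in>{..<n}. W i x) = SZ x" for x unfolding W_def SZ_def by (intro sum.cong) auto
  have sumY: "(\<Sum>i\<in>{n..<n+N}. W i x) = SY x" for x
  proof -
    have "(\<Sum>i\<in>{n..<n+N}. W i x) = (\<Sum>i\<in>{0+n..<N+n}. W i x)" by (simp add: add.commute)
    also have "\<dots> = (\<Sum>i\<in>{0..<N}. W (i+n) x)" by (rule sum.shift_bounds_nat_ivl)
    also have "\<dots> = SY x" unfolding W_def SY_def by (simp add: atLeast0LessThan)
    finally show ?thesis .
  qed
  have iZ: "indep_vars (\<lambda>_. borel) W {..<n}" by (rule indep_vars_subset[OF indW]) auto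
  have iY: "indep_vars (\<lambda>_. borel) W {n..<n+N}" by (rule indep_vars_subset[OF indW]) auto
  have HZ: "measure M {x\<in>space M. SZ x \<ge> real n * \<mu> + e} \<le> exp (-2 * e\<^sup>2 / real n)"
       "measure M {x\<in>space M. SZ x \<le> real n * \<mu> - e} \<le> exp (-2 * e\<^sup>2 / real n)"
    if e: "e \<ge> 0" for e
  proof -
    note h = hoeff_both[OF assms(1) _ _ iZ _ _ e, of \<mu>, unfolded sumZ card_lessThan]
    have ne: "{..<n} \<noteq> {}" using assms(2) by (auto simp: lessThan_empty_iff)
    show "measure M {x\<in>space M. SZ x \<ge> real n * \<mu> + e} \<le> exp (-2 * e\<^sup>2 / real n)"
      by (rule h(1)) (use ne range_Z mean_Z in \<open>auto simp: W_def\<close>)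
    show "measure M {x\<in>space M. SZ x \<le> real n * \<mu> - e} \<le> exp (-2 * e\<^sup>2 / real n)"
      by (rule h(2)) (use ne range_Z mean_Z in \<open>auto simp: W_def\<close>)
  qed
  have HY: "measure M {x\<in>space M. SY x \<ge> real N * \<mu> + e} \<le> exp (-2 * e\<^sup>2 / real N)"
       "measure M {x\<in>space M. SY x \<le> real N * \<mu> - e} \<le> exp (-2 * e\<^sup>2 / real N)"
    if e: "e \<ge> 0" for e
  proof -
    note h = hoeff_both[OF assms(1) _ _ iY _ _ e, of \<mu>, unfolded sumY card_atLeastLessThan]
    have ne: "{n..<n+N} \<noteq> {}" using assms(3) by auto
    have c: "n + N - n = N" by simp
    have rW: "W i x \<in> {0..1}" if "i \<in> {n..<n+N}" "x \<in> space M" for i x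
      using that range_Y[of "i - n" x] by (auto simp: W_def)
    have eW: "expectation (W i) = \<mu>" if "i \<in> {n..<n+N}" for i
      using that mean_Y[of "i - n"] by (auto simp: W_def)
    show "measure M {x\<in>space M. SY x \<ge> real N * \<mu> + e} \<le> exp (-2 * e\<^sup>2 / real N)"
      by (rule h(1)[unfolded c]) (use ne rW eW in auto)
    show "measure M {x\<in>space M. SY x \<le> real N * \<mu> - e} \<le> exp (-2 * e\<^sup>2 / real N)"
      by (rule h(2)[unfolded c]) (use ne rW eW in auto)
  qed
  have Zb: "Zbar x = SZ x / real n" for x unfolding Zbar_def SZ_def by simp
  have Xb: "Xbar x = (SZ x + SY x) / (real n + real N)" for x
    unfolding Xbar_def SZ_def SY_def using n0 by simp
  have expZ: "exp (-2 * (real n * s)\<^sup>2 / real n) \<le> 2 * exp (- varphi * d^2 * real n)"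
    if "2 * real n * s^2 \<ge> varphi * d^2 * real n" for s
  proof -
    have "-2 * (real n * s)\<^sup>2 / real n = - (2 * real n * s^2)" using n0 by (simp add: power2_eq_square)
    hence "exp (-2 * (real n * s)\<^sup>2 / real n) \<le> exp (- varphi * d^2 * real n)" using that by simp
    moreover have "exp (- varphi * d^2 * real n) > 0" by simp
    ultimately show ?thesis by linarith
  qed
  have expY: "exp (-2 * (real N * t)\<^sup>2 / real N) \<le> 2 * exp (- varphi * d^2 * real n)"
    if "2 * real N * t^2 \<ge> varphi * d^2 * real n" for t
  proof -
    have "-2 * (real N * t)\<^sup>2 / real N = - (2 * real N * t^2)" using N0 by (simp add: power2_eq_square)
    hence "exp (-2 * (real N * t)\<^sup>2 / real N) \<le> exp (- varphi * d^2 * real n)" using that by simp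
    moreover have "exp (- varphi * d^2 * real n) > 0" by simp
    ultimately show ?thesis by linarith
  qed
  have P1: "measure M {x \<in> space M. Zbar x \<le> a - d \<and> Xbar x \<ge> a} \<le> 2 * exp (- varphi * d^2 * real n)"
  proof -
    define s where "s = \<mu> - a + d"
    define t where "t = a - \<mu> + real n * d / real N"
    have st: "s + t = d * (1 + real n / real N)" unfolding s_def t_def by (simp add: algebra_simps)
    have sub1: "{x \<in> space M. Zbar x \<le> a - d \<and> Xbar x \<ge> a} \<subseteq> {x\<in>space M. SZ x \<le> real n * \<mu> - real n * s}"
    proof safe
      fix x assume "Zbar x \<le> a - d"
      hence "SZ x \<le> real n * (a - d)" using n0 by (simp add: Zb divide_le_eq mult.commute)
      thus "SZ x \<le> real n * \<mu> - real n * s" by (simp add: s_def algebra_simps)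
    qed
    have sub2: "{x \<in> space M. Zbar x \<le> a - d \<and> Xbar x \<ge> a} \<subseteq> {x\<in>space M. SY x \<ge> real N * \<mu> + real N * t}"
    proof safe
      fix x assume "Zbar x \<le> a - d" "Xbar x \<ge> a"
      hence "SZ x \<le> real n * (a - d)" "SZ x + SY x \<ge> a * (real n + real N)"
        using n0 N0 by (simp_all add: Zb Xb divide_le_eq le_divide_eq mult.commute)
      hence "SY x \<ge> real N * a + real n * d" by (simp add: algebra_simps)
      thus "SY x \<ge> real N * \<mu> + real N * t" using N0 by (simp add: t_def algebra_simps)
    qed
    from key[OF n0 N0 assms(13) st] show ?thesis
    proof
      assume A: "0 \<le> s \<and> varphi * d^2 * real n \<le> 2 * real n * s^2"
      have "measure M {x \<in> space M. Zbar x \<le> a - d \<and> Xbar x \<ge> a} \<le> measure M {x\<in>space M. SZ x \<le> real n * \<mu> - real n * s}"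
        by (rule finite_measure_mono[OF sub1]) measurable
      also have "\<dots> \<le> exp (-2 * (real n * s)\<^sup>2 / real n)" using A by (intro HZ(2)) simp
      also have "\<dots> \<le> 2 * exp (- varphi * d^2 * real n)" using A by (intro expZ) simp
      finally show ?thesis .
    next
      assume A: "0 \<le> t \<and> varphi * d^2 * real n \<le> 2 * real N * t^2"
      have "measure M {x \<in> space M. Zbar x \<le> a - d \<and> Xbar x \<ge> a} \<le> measure M {x\<in>space M. SY x \<ge> real N * \<mu> + real N * t}"
        by (rule finite_measure_mono[OF sub2]) measurable
      also have "\<dots> \<le> exp (-2 * (real N * t)\<^sup>2 / real N)" using A by (intro HY(1)) simp
      also have "\<dots> \<le> 2 * exp (- varphi * d^2 * real n)" using A by (intro expY) simp
      finally show ?thesis .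
    qed
  qed
  have P2: "measure M {x \<in> space M. Zbar x \<ge> a + d \<and> Xbar x \<le> a} \<le> 2 * exp (- varphi * d^2 * real n)"
  proof -
    define s where "s = a + d - \<mu>"
    define t where "t = \<mu> - a + real n * d / real N"
    have st: "s + t = d * (1 + real n / real N)" unfolding s_def t_def by (simp add: algebra_simps)
    have sub1: "{x \<in> space M. Zbar x \<ge> a + d \<and> Xbar x \<le> a} \<subseteq> {x\<in>space M. SZ x \<ge> real n * \<mu> + real n * s}"
    proof safe
      fix x assume "Zbar x \<ge> a + d"
      hence "SZ x \<ge> real n * (a + d)" using n0 by (simp add: Zb le_divide_eq mult.commute)
      thus "SZ x \<ge> real n * \<mu> + real n * s" by (simp add: s_def algebra_simps)
    qed
    have sub2: "{x \<in> space M. Zbar x \<ge> a + d \<and> Xbar x \<le> a} \<subseteq> {x\<in>space M. SY x \<le> real N * \<mu> - real N * t}"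
    proof safe
      fix x assume "Zbar x \<ge> a + d" "Xbar x \<le> a"
      hence "SZ x \<ge> real n * (a + d)" "SZ x + SY x \<le> a * (real n + real N)"
        using n0 N0 by (simp_all add: Zb Xb divide_le_eq le_divide_eq mult.commute)
      hence "SY x \<le> real N * a - real n * d" by (simp add: algebra_simps)
      thus "SY x \<le> real N * \<mu> - real N * t" using N0 by (simp add: t_def algebra_simps)
    qed
    from key[OF n0 N0 assms(13) st] show ?thesis
    proof
      assume A: "0 \<le> s \<and> varphi * d^2 * real n \<le> 2 * real n * s^2"
      have "measure M {x \<in> space M. Zbar x \<ge> a + d \<and> Xbar x \<le> a} \<le> measure M {x\<in>space M. SZ x \<ge> real n * \<mu> + real n * s}"
        by (rule finite_measure_mono[OF sub1]) measurable
      also have "\<dots> \<le> exp (-2 * (real n * s)\<^sup>2 / real n)" using A by (intro HZ(1)) simp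
      also have "\<dots> \<le> 2 * exp (- varphi * d^2 * real n)" using A by (intro expZ) simp
      finally show ?thesis .
    next
      assume A: "0 \<le> t \<and> varphi * d^2 * real n \<le> 2 * real N * t^2"
      have "measure M {x \<in> space M. Zbar x \<ge> a + d \<and> Xbar x \<le> a} \<le> measure M {x\<in>space M. SY x \<le> real N * \<mu> - real N * t}"
        by (rule finite_measure_mono[OF sub2]) measurable
      also have "\<dots> \<le> exp (-2 * (real N * t)\<^sup>2 / real N)" using A by (intro HY(2)) simp
      also have "\<dots> \<le> 2 * exp (- varphi * d^2 * real n)" using A by (intro expY) simp
      finally show ?thesis .
    qed
  qed
  have ex: "\<exists>r\<ge>0. 2 * ((1 + r) / (1 + sqrt r))^2 = varphi"
    by (rule exI[of _ "(sqrt 2 - 1)^2"]) (simp only: f_at varphi_eq zero_le_power2 simp_thms)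
  show ?thesis using P1 P2 ex varphi_eq varphi_gt by blast
qed

end
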